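(* Suppose $1/2\le\sigma<1$, and let $K(x+iy)$ be an analytic function in the closed horizontal strip $\sigma-2\le y\le 0$ satisfying \[ \max_{\sigma-2\le y\le 0}|K(x+iy)| = O\!\left(\frac{1}{|x|^2}\right)\quad\text{as } |x|\to\infty. \] Then for every real $t$, \[ \int_{-\infty}^{\infty}\zeta(\sigma+i(t+u))K(u)\,du = \sum_{n=1}^{\infty}\widehat{K}(\log n)\,n^{-\sigma-it} - 2\pi K\big(-t-i(1-\sigma)\big). \]
   Context: The Fourier transform is $\widehat{K}(\xi):=\int_{-\infty}^{\infty}K(x)e^{-ix\xi}\,dx$ for real $\xi$. $\zeta$ is the Riemann zeta function. *)

theory Defs
  imports "HOL-Complex_Analysis.Complex_Analysis"
begin

text \<open>Riemann zeta function on the half-plane Re s > 0 (s \<noteq> 1), via the classical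
  analytic continuation
  zeta s = s/(s-1) - s * integral over [1,\<infinity>) of frac x * x powr (-s-1).
  For Re s > 1 this agrees with the Dirichlet series; it is only used here for
  1/2 \<le> Re s < 1.\<close>
definition zeta :: "complex \<Rightarrow> complex" where
  "zeta s = s / (s - 1)
     - s * integral {1..} (\<lambda>x::real. complex_of_real (frac x) * complex_of_real x powr (- s - 1))"

definition fourier :: "(complex \<Rightarrow> complex) \<Rightarrow> real \<Rightarrow> complex" where
  "fourier K \<xi> = integral UNIV (\<lambda>x::real. K (complex_of_real x) * exp (- \<i> * complex_of_real (x * \<xi>)))"

end

theory Submission
  imports Defs
begin

lemma has_contour_integral_horiz:
  fixes f :: "complex \<Rightarrow> complex"
  assumes "A < B"
  shows "(f has_contour_integral I) (linepath (Complex A y) (Complex B y)) \<longleftrightarrow>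
         ((\<lambda>x. f (Complex x y)) has_integral I) {A..B}"
proof -
  let ?g = "\<lambda>w. f (w + Complex 0 y)"
  have "(f has_contour_integral I) (linepath (Complex A y) (Complex B y)) \<longleftrightarrow>
        (?g has_contour_integral I) (linepath (of_real A) (of_real B))"
    unfolding has_contour_integral_linepath
  proof (intro arg_cong2[where f="\<lambda>h I. (h has_integral I) {0..1}"] refl ext)
    fix x :: real
    have "linepath (Complex A y) (Complex B y) x = linepath (of_real A) (of_real B) x + Complex 0 y"
      by (simp add: linepath_def complex_eq_iff algebra_simps)
    moreover have "Complex B y - Complex A y = of_real B - of_real A"
      by (simp add: complex_eq_iff)
    ultimately show "f (linepath (Complex A y) (Complex B y) x) * (Complex B y - Complex A y) =
        ?g (linepath (of_real A) (of_real B) x) * (of_real B - of_real A)" by simp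
  qed
  also have "\<dots> \<longleftrightarrow> ((\<lambda>x. ?g (of_real x)) has_integral I) {A..B}"
    using assms by (subst has_contour_integral_linepath_Reals_iff) auto
  also have "(\<lambda>x. ?g (of_real x)) = (\<lambda>x. f (Complex x y))"
  proof
    fix x :: real
    have "complex_of_real x + Complex 0 y = Complex x y" by (simp add: complex_eq_iff)
    then show "?g (of_real x) = f (Complex x y)" by simp
  qed
  finally show ?thesis .
qed

lemma has_integral_UNIV_realI:
  fixes f :: "real \<Rightarrow> 'a::banach"
  assumes "\<And>a b. f integrable_on {a..b}"
    and "\<And>e. e > 0 \<Longrightarrow> \<exists>R. \<forall>a b. a \<le> -R \<longrightarrow> R \<le> b \<longrightarrow> norm (integral {a..b} f - L) < e"
  shows "(f has_integral L) UNIV"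
  unfolding has_integral_alt'
proof (intro conjI allI impI)
  show "(\<lambda>x. if x \<in> UNIV then f x else 0) integrable_on cbox a b" for a b
    using assms(1) by simp
  fix e :: real assume "e > 0"
  then obtain R where R: "\<forall>a b. a \<le> -R \<longrightarrow> R \<le> b \<longrightarrow> norm (integral {a..b} f - L) < e"
    using assms(2) by blast
  show "\<exists>B>0. \<forall>a b. ball 0 B \<subseteq> cbox a b \<longrightarrow>
      norm (integral (cbox a b) (\<lambda>x. if x \<in> UNIV then f x else 0) - L) < e"
  proof (intro exI[of _ "\<bar>R\<bar> + 1"] conjI allI impI)
    fix a b :: real assume "ball 0 (\<bar>R\<bar> + 1) \<subseteq> cbox a b"
    moreover have "-\<bar>R\<bar> \<in> ball 0 (\<bar>R\<bar> + 1)" "\<bar>R\<bar> \<in> ball 0 (\<bar>R\<bar> + 1)"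
      by (auto simp: dist_real_def)
    ultimately have "-\<bar>R\<bar> \<in> cbox a b" "\<bar>R\<bar> \<in> cbox a b" by blast+
    then have "a \<le> -R" "R \<le> b" by auto
    then show "norm (integral (cbox a b) (\<lambda>x. if x \<in> UNIV then f x else 0) - L) < e"
      using R by simp
  qed simp
qed

lemma has_integral_UNIV_realD:
  fixes f :: "real \<Rightarrow> 'a::banach"
  assumes "(f has_integral L) UNIV"
  shows "\<And>a b. f integrable_on {a..b}"
    and "\<And>e. e > 0 \<Longrightarrow> \<exists>R. \<forall>a b. a \<le> -R \<longrightarrow> R \<le> b \<longrightarrow> norm (integral {a..b} f - L) < e"
proof -
  note * = assms[unfolded has_integral_alt']
  show "f integrable_on {a..b}" for a b using *[THEN conjunct1, rule_format, of a b] by simp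
  fix e :: real assume "e > 0"
  then obtain B where "B > 0" and B: "\<forall>a b. ball 0 B \<subseteq> cbox a b \<longrightarrow>
      norm (integral (cbox a b) (\<lambda>x. if x \<in> UNIV then f x else 0) - L) < e"
    using *[THEN conjunct2, rule_format, of e] by blast
  show "\<exists>R. \<forall>a b. a \<le> -R \<longrightarrow> R \<le> b \<longrightarrow> norm (integral {a..b} f - L) < e"
  proof (intro exI[of _ B] allI impI)
    fix a b :: real assume "a \<le> -B" "B \<le> b"
    then have "ball 0 B \<subseteq> cbox a b" by (auto simp: dist_real_def)
    then show "norm (integral {a..b} f - L) < e" using B by simp
  qed
qed


lemma strip_shift:
  fixes \<Phi> :: "complex \<Rightarrow> complex" and a Rz :: real and c L :: complex
  assumes "a < 0"
    and rect: "\<And>A B. A \<ge> Rz \<Longrightarrow> B \<ge> Rz \<Longrightarrow>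
                 (\<Phi> has_contour_integral c) (rectpath (Complex (-A) a) (Complex B 0))"
    and decay: "\<And>e. e > 0 \<Longrightarrow> \<exists>R. \<forall>x y. R \<le> \<bar>x\<bar> \<longrightarrow> a \<le> y \<longrightarrow> y \<le> 0 \<longrightarrow> norm (\<Phi> (Complex x y)) \<le> e"
    and bottom: "((\<lambda>x. \<Phi> (Complex x a)) has_integral L) UNIV"
  shows "((\<lambda>x. \<Phi> (of_real x)) has_integral (L - c)) UNIV"
proof -
  have key: "(\<lambda>x. \<Phi> (of_real x)) integrable_on {-A..B} \<and>
      norm (integral {-A..B} (\<lambda>x. \<Phi> (of_real x)) - (L - c))
        \<le> norm (integral {-A..B} (\<lambda>x. \<Phi> (Complex x a)) - L) + 2 * e * (-a)"
    if AB: "A \<ge> max Rz 1" "B \<ge> max Rz 1" and e: "e > 0"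
      and Re: "\<forall>x y. A \<le> \<bar>x\<bar> \<longrightarrow> a \<le> y \<longrightarrow> y \<le> 0 \<longrightarrow> norm (\<Phi> (Complex x y)) \<le> e"
      and Be: "\<forall>x y. B \<le> \<bar>x\<bar> \<longrightarrow> a \<le> y \<longrightarrow> y \<le> 0 \<longrightarrow> norm (\<Phi> (Complex x y)) \<le> e"
    for A B e
  proof -
    define a1 a2 a3 a4 where "a1 = Complex (-A) a" and "a2 = Complex B a"
      and "a3 = Complex B 0" and "a4 = Complex (-A) 0"
    have hc: "(\<Phi> has_contour_integral c)
        (linepath a1 a2 +++ linepath a2 a3 +++ linepath a3 a4 +++ linepath a4 a1)"
      using rect[of A B] AB by (simp add: rectpath_def Let_def a1_def a2_def a3_def a4_def)
    then have ci: "\<Phi> contour_integrable_on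
        (linepath a1 a2 +++ linepath a2 a3 +++ linepath a3 a4 +++ linepath a4 a1)"
      by (auto simp: contour_integrable_on_def)
    have i1: "\<Phi> contour_integrable_on linepath a1 a2"
      and i2: "\<Phi> contour_integrable_on linepath a2 a3"
      and i3: "\<Phi> contour_integrable_on linepath a3 a4"
      and i4: "\<Phi> contour_integrable_on linepath a4 a1"
      using ci by (simp_all add: valid_path_join)
    define I1 I2 I3 I4 where "I1 = contour_integral (linepath a1 a2) \<Phi>"
      and "I2 = contour_integral (linepath a2 a3) \<Phi>"
      and "I3 = contour_integral (linepath a3 a4) \<Phi>"
      and "I4 = contour_integral (linepath a4 a1) \<Phi>"
    have "c = I1 + (I2 + (I3 + I4))"
      using contour_integral_unique[OF hc] i1 i2 i3 i4
      by (simp add: valid_path_join I1_def I2_def I3_def I4_def)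
    have AB': "-A < B" using AB by auto
    have h1: "((\<lambda>x. \<Phi> (Complex x a)) has_integral I1) {-A..B}"
      using has_contour_integral_horiz[OF AB', of \<Phi> I1 a] i1
      by (simp add: I1_def a1_def a2_def has_contour_integral_integral)
    have "(\<Phi> has_contour_integral - I3) (linepath a4 a3)"
    proof -
      have "(\<Phi> has_contour_integral I3) (linepath a3 a4)"
        using i3 by (simp add: I3_def has_contour_integral_integral)
      from has_contour_integral_reversepath[OF _ this] show ?thesis
        by simp
    qed
    then have h3: "((\<lambda>x. \<Phi> (Complex x 0)) has_integral - I3) {-A..B}"
      using has_contour_integral_horiz[OF AB', of \<Phi> "- I3" 0]
      by (simp add: a3_def a4_def)
    have eq0: "(\<lambda>x. \<Phi> (Complex x 0)) = (\<lambda>x. \<Phi> (of_real x))"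
      by (simp add: complex_of_real_def)
    have "norm I2 \<le> e * norm (a3 - a2)"
    proof (rule has_contour_integral_bound_linepath)
      show "(\<Phi> has_contour_integral I2) (linepath a2 a3)"
        using i2 by (simp add: I2_def has_contour_integral_integral)
      show "0 \<le> e" using e by simp
      fix z assume "z \<in> closed_segment a2 a3"
      then have "Re z = B" "Im z \<in> closed_segment a 0"
        by (auto simp: a2_def a3_def closed_segment_same_Re)
      then have "a \<le> Im z" "Im z \<le> 0" using \<open>a < 0\<close> by (auto simp: closed_segment_eq_real_ivl)
      moreover have "B \<le> \<bar>Re z\<bar>" using \<open>Re z = B\<close> by simp
      ultimately have "norm (\<Phi> (Complex (Re z) (Im z))) \<le> e" using Be by blast
      then show "norm (\<Phi> z) \<le> e" by simp
    qed
    also have "norm (a3 - a2) = - a" using \<open>a < 0\<close> by (simp add: a2_def a3_def cmod_def)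
    finally have n2: "norm I2 \<le> e * (-a)" .
    have "norm I4 \<le> e * norm (a1 - a4)"
    proof (rule has_contour_integral_bound_linepath)
      show "(\<Phi> has_contour_integral I4) (linepath a4 a1)"
        using i4 by (simp add: I4_def has_contour_integral_integral)
      show "0 \<le> e" using e by simp
      fix z assume "z \<in> closed_segment a4 a1"
      then have "Re z = -A" "Im z \<in> closed_segment 0 a"
        by (auto simp: a1_def a4_def closed_segment_same_Re)
      then have "a \<le> Im z" "Im z \<le> 0" using \<open>a < 0\<close> by (auto simp: closed_segment_eq_real_ivl)
      moreover have "A \<le> \<bar>Re z\<bar>" using \<open>Re z = -A\<close> AB by simp
      ultimately have "norm (\<Phi> (Complex (Re z) (Im z))) \<le> e" using Re by blast
      then show "norm (\<Phi> z) \<le> e" by simp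
    qed
    also have "norm (a1 - a4) = - a" using \<open>a < 0\<close> by (simp add: a1_def a4_def cmod_def)
    finally have n4: "norm I4 \<le> e * (-a)" .
    have int3: "integral {-A..B} (\<lambda>x. \<Phi> (of_real x)) = - I3"
      using h3 eq0 by (simp add: integral_unique)
    have int1: "integral {-A..B} (\<lambda>x. \<Phi> (Complex x a)) = I1"
      using h1 by (simp add: integral_unique)
    have eqn: "integral {-A..B} (\<lambda>x. \<Phi> (of_real x)) - (L - c) = (I1 - L) + I2 + I4"
      using int3 \<open>c = I1 + (I2 + (I3 + I4))\<close> by (simp add: algebra_simps)
    have nb: "norm ((I1 - L) + I2 + I4) \<le> norm (I1 - L) + norm I2 + norm I4"
      using norm_triangle_ineq[of "(I1 - L) + I2" I4] norm_triangle_ineq[of "I1 - L" I2] by linarith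
    have "norm (integral {-A..B} (\<lambda>x. \<Phi> (of_real x)) - (L - c)) \<le> norm (I1 - L) + norm I2 + norm I4"
      unfolding eqn by (rule nb)
    moreover have "(\<lambda>x. \<Phi> (of_real x)) integrable_on {-A..B}"
      using h3 eq0 by (metis integrable_on_def)
    ultimately show ?thesis using n2 n4 int1 by simp
  qed
  note bot = has_integral_UNIV_realD[OF bottom]
  show ?thesis
  proof (rule has_integral_UNIV_realI)
    fix lo hi :: real
    obtain e :: real where e: "e > 0" by (meson zero_less_one)
    obtain R where R: "\<forall>x y. R \<le> \<bar>x\<bar> \<longrightarrow> a \<le> y \<longrightarrow> y \<le> 0 \<longrightarrow> norm (\<Phi> (Complex x y)) \<le> e"
      using decay[OF e] by blast
    define M where "M = max (max Rz 1) (max R (max \<bar>lo\<bar> \<bar>hi\<bar>))"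
    have M: "Rz \<le> M" "1 \<le> M" "R \<le> M" "\<bar>lo\<bar> \<le> M" "\<bar>hi\<bar> \<le> M"
      unfolding M_def by linarith+
    have RM: "\<forall>x y. M \<le> \<bar>x\<bar> \<longrightarrow> a \<le> y \<longrightarrow> y \<le> 0 \<longrightarrow> norm (\<Phi> (Complex x y)) \<le> e"
      using R M(3) by (meson order_trans)
    have "max Rz 1 \<le> M" using M by simp
    then have "(\<lambda>x. \<Phi> (of_real x)) integrable_on {-M..M}"
      using key[of M M e] RM e by blast
    moreover have "{lo..hi} \<subseteq> {-M..M}" using M(4,5) by auto
    ultimately show "(\<lambda>x. \<Phi> (of_real x)) integrable_on {lo..hi}"
      by (rule integrable_on_subinterval)
  next
    fix \<epsilon> :: real assume "\<epsilon> > 0"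
    define e where "e = \<epsilon> / (4 * (1 - a))"
    have e: "e > 0" using \<open>\<epsilon> > 0\<close> \<open>a < 0\<close> by (simp add: e_def)
    obtain R where R: "\<forall>x y. R \<le> \<bar>x\<bar> \<longrightarrow> a \<le> y \<longrightarrow> y \<le> 0 \<longrightarrow> norm (\<Phi> (Complex x y)) \<le> e"
      using decay[OF e] by blast
    obtain R2 where R2: "\<forall>lo hi. lo \<le> -R2 \<longrightarrow> R2 \<le> hi \<longrightarrow>
        norm (integral {lo..hi} (\<lambda>x. \<Phi> (Complex x a)) - L) < \<epsilon> / 2"
      using bot(2)[of "\<epsilon>/2"] \<open>\<epsilon> > 0\<close> by auto
    define M where "M = max (max Rz 1) (max R R2)"
    show "\<exists>R. \<forall>lo hi. lo \<le> -R \<longrightarrow> R \<le> hi \<longrightarrow>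
        norm (integral {lo..hi} (\<lambda>x. \<Phi> (of_real x)) - (L - c)) < \<epsilon>"
    proof (intro exI[of _ M] allI impI)
      fix lo hi :: real assume lh: "lo \<le> -M" "M \<le> hi"
      have M: "Rz \<le> M" "1 \<le> M" "R \<le> M" "R2 \<le> M"
        unfolding M_def by linarith+
      have A: "-lo \<ge> max Rz 1" "hi \<ge> max Rz 1" using lh M by linarith+
      have "R \<le> -lo" "R \<le> hi" using lh M by linarith+
      then have RA: "\<forall>x y. -lo \<le> \<bar>x\<bar> \<longrightarrow> a \<le> y \<longrightarrow> y \<le> 0 \<longrightarrow> norm (\<Phi> (Complex x y)) \<le> e"
        and RB: "\<forall>x y. hi \<le> \<bar>x\<bar> \<longrightarrow> a \<le> y \<longrightarrow> y \<le> 0 \<longrightarrow> norm (\<Phi> (Complex x y)) \<le> e"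
        using R by (meson order_trans)+
      have k: "norm (integral {lo..hi} (\<lambda>x. \<Phi> (of_real x)) - (L - c))
        \<le> norm (integral {lo..hi} (\<lambda>x. \<Phi> (Complex x a)) - L) + 2 * e * (-a)"
        using key[OF A e RA RB] by simp
      have "norm (integral {lo..hi} (\<lambda>x. \<Phi> (Complex x a)) - L) < \<epsilon> / 2"
        using R2 lh M by (meson order_trans neg_le_iff_le)
      moreover have "2 * e * (-a) \<le> \<epsilon> / 2"
        using \<open>a < 0\<close> \<open>\<epsilon> > 0\<close> by (simp add: e_def field_simps)
      ultimately show "norm (integral {lo..hi} (\<lambda>x. \<Phi> (of_real x)) - (L - c)) < \<epsilon>"
        using k by linarith
    qed
  qed
qed


definition E :: "real \<Rightarrow> complex \<Rightarrow> complex" where "E t w = exp (w * of_real (ln t))"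

lemma powr_E: "t > 0 \<Longrightarrow> of_real t powr w = E t w"
  by (simp add: powr_def E_def Ln_of_real)

lemma norm_E: "t > 0 \<Longrightarrow> norm (E t w) = t powr Re w"
  by (simp add: E_def norm_exp_eq_Re powr_def)

lemma E_add: "E t (v + w) = E t v * E t w"
  by (simp add: E_def distrib_right exp_add)

lemma E_one: "t > 0 \<Longrightarrow> E t 1 = of_real t"
  by (simp add: E_def exp_of_real)

lemma E_at_1 [simp]: "E 1 w = 1"
  by (simp add: E_def)

definition gk :: "nat \<Rightarrow> complex \<Rightarrow> real \<Rightarrow> complex" where
  "gk k s x = (of_real x - of_nat k) * E x (-s-1)"

definition J :: "nat \<Rightarrow> complex \<Rightarrow> complex" where
  "J k s = integral {real k..real k + 1} (gk k s)"

lemma continuous_on_E [continuous_intros]: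
  assumes "\<And>x. x \<in> S \<Longrightarrow> x > 0"
  shows "continuous_on S (\<lambda>x. E x w)"
  unfolding E_def using assms by (intro continuous_intros) auto

lemma gk_integrable:
  assumes "k \<ge> 1"
  shows "gk k s integrable_on {real k..real k + 1}"
proof -
  have "continuous_on {real k..real k + 1} (gk k s)"
    unfolding gk_def using assms by (intro continuous_intros) auto
  then show ?thesis by (rule integrable_continuous_real)
qed

lemma gk_bound:
  assumes "k \<ge> 1" "x \<in> {real k..real k + 1}" "Re s \<ge> 0"
  shows "norm (gk k s x) \<le> real k powr (- Re s - 1)"
proof -
  have x: "x > 0" using assms by auto
  have "norm (gk k s x) = \<bar>x - k\<bar> * x powr (- Re s - 1)"
  proof -
    have "norm (of_real x - of_nat k :: complex) = \<bar>x - k\<bar>"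
      by (metis norm_of_real of_real_diff of_real_of_nat_eq)
    moreover have "norm (E x (-s-1)) = x powr (- Re s - 1)" using x by (simp add: norm_E)
    ultimately show ?thesis unfolding gk_def norm_mult by simp
  qed
  also have "\<dots> \<le> 1 * real k powr (- Re s - 1)"
  proof (rule mult_mono)
    show "\<bar>x - real k\<bar> \<le> 1" using assms by auto
    show "x powr (- Re s - 1) \<le> real k powr (- Re s - 1)"
      using assms by (intro powr_mono2') auto
  qed auto
  finally show ?thesis by simp
qed

lemma J_bound:
  assumes "k \<ge> 1" "Re s \<ge> 0"
  shows "norm (J k s) \<le> real k powr (- Re s - 1)"
proof -
  have "norm (J k s) \<le> real k powr (- Re s - 1) * measure lborel (cbox (real k) (real k + 1))"
    unfolding J_def
    by (rule has_integral_bound[where f="gk k s"])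
       (use gk_integrable[OF assms(1)] gk_bound[OF assms(1) _ assms(2)] in auto)
  then show ?thesis by simp
qed

lemma J_holomorphic:
  assumes "k \<ge> 1"
  shows "J k holomorphic_on {s. Re s > 0}"
proof -
  have "(\<lambda>s. integral (cbox (real k) (real k + 1)) (gk k s)) holomorphic_on {s. Re s > 0}"
  proof (rule leibniz_rule_holomorphic[where
        fx="\<lambda>s x. (of_real x - of_nat k) * (- of_real (ln x)) * E x (-s-1)"])
    fix s :: complex and x :: real
    assume "s \<in> {s. Re s > 0}" "x \<in> cbox (real k) (real k + 1)"
    show "((\<lambda>s. gk k s x) has_field_derivative
            (of_real x - of_nat k) * (- of_real (ln x)) * E x (-s-1)) (at s within {s. Re s > 0})"
      unfolding gk_def E_def
      by (auto intro!: derivative_eq_intros)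
  next
    fix s :: complex assume "s \<in> {s. Re s > 0}"
    show "gk k s integrable_on cbox (real k) (real k + 1)"
      using gk_integrable[OF assms] by simp
  next
    show "continuous_on ({s. Re s > 0} \<times> cbox (real k) (real k + 1))
            (\<lambda>(s, x). (of_real x - of_nat k) * (- of_real (ln x)) * E x (-s-1))"
      unfolding E_def using assms
      by (auto intro!: continuous_intros simp: case_prod_unfold)
  next
    show "convex {s. Re s > 0}" by (rule convex_halfspace_Re_gt)
  qed
  then show ?thesis unfolding J_def by simp
qed


definition fz :: "complex \<Rightarrow> real \<Rightarrow> complex" where
  "fz s x = complex_of_real (frac x) * complex_of_real x powr (- s - 1)"

definition Iz :: "complex \<Rightarrow> complex" where
  "Iz s = integral {1..} (fz s)"

lemma zeta_Iz: "zeta s = s / (s - 1) - s * Iz s"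
  unfolding zeta_def Iz_def fz_def by simp

lemma fz_piece:
  assumes "k \<ge> 1"
  shows "(fz s has_integral J k s) {real k..real k + 1}"
proof -
  have "(gk k s has_integral J k s) {real k..real k + 1}"
    unfolding J_def using gk_integrable[OF assms] by (rule integrable_integral)
  then show ?thesis
  proof (rule has_integral_spike_finite[where S="{real k + 1}", rotated 2])
    fix x assume x: "x \<in> {real k..real k + 1} - {real k + 1}"
    then have "\<lfloor>x\<rfloor> = int k" by (intro floor_unique) auto
    then have "frac x = x - real k" by (simp add: frac_def)
    moreover have "x > 0" using x assms by auto
    ultimately show "fz s x = gk k s x"
      by (simp add: fz_def gk_def powr_E)
  qed simp
qed

lemma fz_partial:
  "(fz s has_integral (\<Sum>k<N. J (Suc k) s)) {1..real N + 1}"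
proof (induction N)
  case 0
  show ?case using has_integral_refl(2)[of "fz s" 1] by simp
next
  case (Suc N)
  have "(fz s has_integral J (Suc N) s) {real N + 1..real N + 2}"
    using fz_piece[of "Suc N" s] by (simp add: add.commute)
  from has_integral_combine[OF _ _ Suc.IH this] show ?case
    by (simp add: add.commute)
qed

lemma fz_norm:
  assumes "x \<ge> 1"
  shows "norm (fz s x) \<le> x powr (- Re s - 1)"
proof -
  have "norm (fz s x) = frac x * x powr (- Re s - 1)"
    using assms by (simp add: fz_def norm_mult powr_E norm_E frac_ge_0)
  also have "\<dots> \<le> 1 * x powr (- Re s - 1)"
    by (intro mult_right_mono) (auto simp: frac_lt_1 less_imp_le)
  finally show ?thesis by simp
qed

lemma J_sums:
  assumes "Re s > 0"
  shows "(\<lambda>k. J (Suc k) s) sums Iz s" and "fz s integrable_on {1..}"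
proof -
  define fN where "fN N x = (if x \<in> {1..real N + 1} then fz s x else 0)" for N x
  have fN_int: "(fN N has_integral (\<Sum>k<N. J (Suc k) s)) {1..}" for N
  proof -
    have "(fN N has_integral (\<Sum>k<N. J (Suc k) s)) {1..real N + 1}"
      using fz_partial[of s N] by (rule has_integral_eq[rotated]) (simp add: fN_def)
    then show ?thesis
      by (rule has_integral_on_superset) (auto simp: fN_def)
  qed
  have h: "(\<lambda>x. x powr (- Re s - 1)) integrable_on {1..}"
    using has_integral_powr_to_inf[of "- Re s - 1" 1] assms by (auto simp: integrable_on_def)
  have i1: "fN N integrable_on {1..}" for N using fN_int by blast
  have i3: "norm (fN N x) \<le> x powr (- Re s - 1)" if "x \<in> {1..}" for N x
  proof (cases "x \<in> {1..real N + 1}")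
    case True
    then show ?thesis using fz_norm[of x s] by (simp add: fN_def)
  next
    case False
    then have "fN N x = 0" unfolding fN_def by (simp only: if_False)
    then show ?thesis by simp
  qed
  have i4: "(\<lambda>N. fN N x) \<longlonglongrightarrow> fz s x" if "x \<in> {1..}" for x
  proof (rule tendsto_eventually)
    obtain N0 :: nat where N0: "x \<le> real N0" using real_arch_simple by blast
    have "fN N x = fz s x" if "N \<ge> N0" for N
    proof -
      have "x \<in> {1..real N + 1}" using \<open>x \<in> {1..}\<close> N0 that by simp
      then show ?thesis by (simp add: fN_def)
    qed
    then show "\<forall>\<^sub>F N in sequentially. fN N x = fz s x"
      unfolding eventually_sequentially by blast
  qed
  note dc = dominated_convergence[where f=fN and h="\<lambda>x. x powr (- Re s - 1)" and S="{1..}" and g="fz s",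
     OF i1 h i3 i4]
  then show "fz s integrable_on {1..}" by blast
  have eqI: "integral {1..} (fN N) = (\<Sum>k<N. J (Suc k) s)" for N
    using fN_int[of N] by (rule integral_unique)
  have "(\<lambda>N. \<Sum>k<N. J (Suc k) s) \<longlonglongrightarrow> Iz s"
    using dc(2) unfolding Iz_def eqI .
  then show "(\<lambda>k. J (Suc k) s) sums Iz s" by (simp add: sums_def)
qed


lemma summable_Suc_powr:
  assumes "r < -1"
  shows "summable (\<lambda>n. real (Suc n) powr r)"
  using summable_real_powr_iff[of r] assms summable_Suc_iff[of "\<lambda>n. real n powr r"] by simp

lemma Iz_holomorphic: "Iz holomorphic_on {s. Re s > 0}"
proof -
  have S: "open {s::complex. Re s > 0}" by (rule open_halfspace_Re_gt)
  obtain g where g: "\<forall>x \<in> {s. Re s > 0}. ((\<lambda>n. J (Suc n) x) sums g x) \<and> g field_differentiable (at x)"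
  proof (rule series_differentiable_comparison_complex[OF S])
    fix n :: nat and x :: complex assume "x \<in> {s. Re s > 0}"
    then show "J (Suc n) field_differentiable (at x)"
      using J_holomorphic[of "Suc n"] S holomorphic_on_imp_differentiable_at by auto
  next
    fix x :: complex assume x: "x \<in> {s. Re s > 0}"
    define d where "d = Re x / 2"
    define h where "h n = complex_of_real (real (Suc n) powr (- d - 1))" for n
    have "d > 0" using x by (simp add: d_def)
    have "summable (\<lambda>n. real (Suc n) powr (- d - 1))"
      using \<open>d > 0\<close> by (intro summable_Suc_powr) auto
    then have "summable h" unfolding h_def by (rule summable_of_real)
    moreover have "range h \<subseteq> \<real>\<^sub>\<ge>\<^sub>0" by (auto simp: h_def)
    moreover have "\<forall>\<^sub>F n in sequentially. \<forall>y\<in>ball x d \<inter> {s. Re s > 0}. cmod (J (Suc n) y) \<le> cmod (h n)"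
    proof (intro always_eventually allI ballI)
      fix n :: nat and y assume y: "y \<in> ball x d \<inter> {s. Re s > 0}"
      then have "\<bar>Re x - Re y\<bar> < d"
        using abs_Re_le_cmod[of "x - y"] by (auto simp: dist_norm)
      then have "Re y \<ge> d" unfolding d_def abs_less_iff by linarith
      have "cmod (J (Suc n) y) \<le> real (Suc n) powr (- Re y - 1)"
        using J_bound[of "Suc n" y] y by simp
      also have "\<dots> \<le> real (Suc n) powr (- d - 1)"
        using \<open>Re y \<ge> d\<close> by (intro powr_mono) auto
      also have "\<dots> = cmod (h n)" by (simp add: h_def)
      finally show "cmod (J (Suc n) y) \<le> cmod (h n)" .
    qed
    ultimately show "\<exists>d h. 0 < d \<and> summable h \<and> range h \<subseteq> \<real>\<^sub>\<ge>\<^sub>0 \<and>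
        (\<forall>\<^sub>F n in sequentially. \<forall>y\<in>ball x d \<inter> {s. Re s > 0}. cmod (J (Suc n) y) \<le> cmod (h n))"
      using \<open>d > 0\<close> by blast
  qed blast
  have "g holomorphic_on {s. Re s > 0}"
    using g S by (simp add: holomorphic_on_def field_differentiable_at_within)
  moreover have "g x = Iz x" if "x \<in> {s. Re s > 0}" for x
    using g that J_sums(1)[of x] sums_unique2 by auto
  ultimately show ?thesis by (rule holomorphic_transform)
qed

definition MI :: real where "MI = (\<Sum>n. real (Suc n) powr (- 3 / 2))"

lemma Iz_bound:
  assumes "Re s \<ge> 1/2"
  shows "norm (Iz s) \<le> MI"
proof -
  have "Iz s = (\<Sum>n. J (Suc n) s)" using J_sums(1)[of s] assms by (simp add: sums_iff)
  also have "norm \<dots> \<le> MI" unfolding MI_def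
  proof (rule norm_suminf_le)
    show "summable (\<lambda>n. real (Suc n) powr (- 3 / 2))" by (rule summable_Suc_powr) simp
    fix n
    have "norm (J (Suc n) s) \<le> real (Suc n) powr (- Re s - 1)"
      using J_bound[of "Suc n" s] assms by simp
    also have "\<dots> \<le> real (Suc n) powr (- 3 / 2)"
      using assms by (intro powr_mono) auto
    finally show "norm (J (Suc n) s) \<le> real (Suc n) powr (- 3 / 2)" .
  qed
  finally show ?thesis .
qed

lemma MI_nonneg: "MI \<ge> 0"
  unfolding MI_def by (intro suminf_nonneg summable_Suc_powr) auto


lemma alg0: "(a / c + k * (b / s)) - (a' / c + k * (b' / s)) = (a - a') / c + k * (b - b') / s"
  for a a' b b' c k s :: complex
  by (simp add: diff_divide_distrib right_diff_distrib)

lemma alg1: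
  fixes n A B S c s :: complex
  assumes "c \<noteq> 0" "s \<noteq> 0"
  shows "((n*A - 1)/c - (S - n*A)/s) + (((n+1)*B - n*A)/c + n*(B - A)/s)
         = ((n+1)*B - 1)/c - ((S + B) - (n+1)*B)/s"
  using assms by (simp add: field_simps)

lemma alg2:
  fixes X S s :: complex
  assumes "s \<noteq> 0" "s - 1 \<noteq> 0"
  shows "S = s/(s-1) - s*((X - 1)/(1-s) - (S - X)/s) - X/(s-1)"
proof -
  have 1: "(X - 1)/(1-s) = (1 - X)/(s-1)"
    by (metis minus_diff_eq divide_minus_left divide_minus_right)
  have 2: "s*((1-X)/(s-1) - (S-X)/s) = s*(1-X)/(s-1) - (S - X)"
  proof -
    have a: "s * ((S-X)/s) = S - X" using assms(1) by simp
    have b: "s * ((1-X)/(s-1)) = s*(1-X)/(s-1)" by simp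
    show ?thesis unfolding right_diff_distrib a b ..
  qed
  have 3: "s/(s-1) - s*(1-X)/(s-1) - X/(s-1) = X"
  proof -
    have "s/(s-1) - s*(1-X)/(s-1) - X/(s-1) = (s - s*(1-X) - X)/(s-1)"
      by (simp add: diff_divide_distrib)
    also have "s - s*(1-X) - X = X * (s - 1)" by (simp add: algebra_simps)
    finally show ?thesis using assms(2) by simp
  qed
  show ?thesis unfolding 1 2 using 3 by (simp add: algebra_simps)
qed

lemma J_closed:
  assumes "k \<ge> 1" "s \<noteq> 0" "s \<noteq> 1"
  shows "J k s = (of_nat (k+1) powr (1-s) - of_nat k powr (1-s)) / (1-s)
               + of_nat k * (of_nat (k+1) powr (-s) - of_nat k powr (-s)) / s"
proof -
  define H where "H z = z powr (1-s) / (1-s) + of_nat k * (z powr (-s) / s)" for z :: complex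
  have s1: "1 - s \<noteq> 0" using assms by auto
  have der: "(H has_field_derivative (z powr (-s) - of_nat k * z powr (-s-1))) (at z)"
    if "z \<notin> \<real>\<^sub>\<le>\<^sub>0" for z
  proof -
    have d1: "((\<lambda>z. z powr (1-s)) has_field_derivative ((1-s) * z powr (-s))) (at z)"
      using has_field_derivative_powr[OF that, of "1-s"] by simp
    have d2: "((\<lambda>z. z powr (-s)) has_field_derivative ((-s) * z powr (-s-1))) (at z)"
      using has_field_derivative_powr[OF that, of "-s"] by simp
    have "(H has_field_derivative ((1-s) * z powr (-s) / (1-s) + of_nat k * ((-s) * z powr (-s-1) / s))) (at z)"
      unfolding H_def by (intro DERIV_add DERIV_cdivide DERIV_cmult d1 d2)
    moreover have "(1-s) * z powr (-s) / (1-s) + of_nat k * ((-s) * z powr (-s-1) / s)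
                   = z powr (-s) - of_nat k * z powr (-s-1)"
      using s1 assms(2) by (simp add: field_simps)
    ultimately show ?thesis by simp
  qed
  have "(gk k s has_integral (H (of_real (real k + 1)) - H (of_real (real k)))) {real k..real k + 1}"
  proof (rule fundamental_theorem_of_calculus[where f="\<lambda>x. H (of_real x)"])
    show "real k \<le> real k + 1" by simp
    fix x assume x: "x \<in> {real k..real k + 1}"
    then have "x > 0" using assms by auto
    then have "complex_of_real x \<notin> \<real>\<^sub>\<le>\<^sub>0" by (simp add: complex_nonpos_Reals_iff)
    from has_vector_derivative_real_field[OF der[OF this]]
    have "((\<lambda>x. H (of_real x)) has_vector_derivative
           (of_real x powr (-s) - of_nat k * of_real x powr (-s-1))) (at x within {real k..real k + 1})" .
    moreover have "of_real x powr (-s) - of_nat k * of_real x powr (-s-1) = gk k s x"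
    proof -
      have "E x (-s) = E x (1 + (-s-1))" by simp
      also have "\<dots> = of_real x * E x (-s-1)" using \<open>x > 0\<close> by (simp only: E_add E_one)
      finally have "E x (-s) = of_real x * E x (-s-1)" .
      then show ?thesis using \<open>x > 0\<close> by (simp add: powr_E gk_def algebra_simps)
    qed
    ultimately show "((\<lambda>x. H (of_real x)) has_vector_derivative gk k s x) (at x within {real k..real k + 1})"
      by simp
  qed
  then have "J k s = H (of_real (real k + 1)) - H (of_real (real k))"
    unfolding J_def by (rule integral_unique)
  also have "\<dots> = (of_nat (k+1) powr (1-s) - of_nat k powr (1-s)) / (1-s)
               + of_nat k * (of_nat (k+1) powr (-s) - of_nat k powr (-s)) / s"
    unfolding H_def alg0 by (simp add: add.commute)
  finally show ?thesis .
qed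

lemma powr_one_minus: "(n::nat) \<ge> 1 \<Longrightarrow> of_nat n powr (1 - s) = of_nat n * of_nat n powr (- s :: complex)"
proof -
  assume "n \<ge> 1"
  have "(of_nat n :: complex) powr (1 - s) = of_nat n powr (1 + (-s))" by simp
  also have "\<dots> = of_nat n powr 1 * of_nat n powr (-s)" by (rule powr_add)
  finally show ?thesis by simp
qed

lemma J_partial:
  assumes "s \<noteq> 0" "s \<noteq> 1"
  shows "(\<Sum>k<N. J (Suc k) s) =
    (of_nat (N+1) * of_nat (N+1) powr (-s) - 1) / (1-s)
    - ((\<Sum>k<N+1. of_nat (Suc k) powr (-s)) - of_nat (N+1) * of_nat (N+1) powr (-s)) / s"
proof (induction N)
  case 0
  then show ?case by simp
next
  case (Suc N)
  have s1: "1 - s \<noteq> 0" using assms by auto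
  define n where "n = (of_nat (N+1) :: complex)"
  define A where "A = (of_nat (N+1) :: complex) powr (-s)"
  define B where "B = (of_nat (N+1+1) :: complex) powr (-s)"
  define S where "S = (\<Sum>k<N+1. (of_nat (Suc k) :: complex) powr (-s))"
  have f1: "(of_nat (N+1+1) :: complex) powr (1-s) = (n+1)*B"
    using powr_one_minus[of "N+1+1" s] by (simp add: n_def B_def)
  have f2: "(of_nat (N+1) :: complex) powr (1-s) = n*A"
    using powr_one_minus[of "N+1" s] by (simp add: n_def A_def)
  have f3: "(of_nat (N+1+1) :: complex) powr (-s) = B" by (simp add: B_def)
  have f4: "(of_nat (N+1) :: complex) powr (-s) = A" by (simp add: A_def)
  have f5: "(of_nat (N+1) :: complex) = n" by (simp add: n_def)
  have J: "J (N+1) s = ((n+1)*B - n*A)/(1-s) + n*(B - A)/s"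
    using J_closed[of "N+1" s, unfolded f1 f2, unfolded f3 f4, unfolded f5] assms by simp
  have IH: "(\<Sum>k<N. J (Suc k) s) = (n*A - 1)/(1-s) - (S - n*A)/s"
    using Suc.IH[unfolded f4, unfolded f5, folded S_def] .
  have "(\<Sum>k<Suc N. J (Suc k) s) = (\<Sum>k<N. J (Suc k) s) + J (N+1) s" by simp
  also have "\<dots> = ((n*A - 1)/(1-s) - (S - n*A)/s) + (((n+1)*B - n*A)/(1-s) + n*(B - A)/s)"
    unfolding IH J ..
  also have "\<dots> = ((n+1)*B - 1)/(1-s) - ((S + B) - (n+1)*B)/s" by (rule alg1[OF s1 assms(1)])
  also have "(n+1)*B = of_nat (Suc N + 1) * of_nat (Suc N + 1) powr (-s)"
    by (simp add: n_def B_def)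
  also have "S + B = (\<Sum>k<Suc N + 1. of_nat (Suc k) powr (-s))"
    by (simp add: S_def B_def)
  finally show ?case .
qed

lemma zeta_dirichlet:
  assumes "Re s > 1"
  shows "(\<lambda>n. of_nat (Suc n) powr (- s)) sums zeta s"
proof -
  have s0: "s \<noteq> 0" "s \<noteq> 1" "s - 1 \<noteq> 0" using assms by auto
  have eq: "(\<Sum>k<Suc N. of_nat (Suc k) powr (-s)) =
      s / (s - 1) - s * (\<Sum>k<N. J (Suc k) s) - of_nat (Suc N) powr (1 - s) / (s - 1)" for N
  proof -
    have "of_nat (Suc N) powr (1 - s) = of_nat (N+1) * of_nat (N+1) powr (-s)"
      using powr_one_minus[of "N+1" s] by simp
    then show ?thesis
      unfolding J_partial[OF s0(1,2), of N] using alg2[OF s0(1,3)] by simp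
  qed
  have "(\<lambda>N. \<Sum>k<N. J (Suc k) s) \<longlonglongrightarrow> Iz s"
    using J_sums(1)[of s] assms by (simp add: sums_def)
  moreover have "(\<lambda>N. of_nat (Suc N) powr (1 - s)) \<longlonglongrightarrow> 0"
    using assms by (intro tendsto_neg_powr_complex_of_nat filterlim_Suc) auto
  ultimately have "(\<lambda>N. s / (s - 1) - s * (\<Sum>k<N. J (Suc k) s) - of_nat (Suc N) powr (1 - s) / (s - 1))
      \<longlonglongrightarrow> s / (s - 1) - s * Iz s - 0 / (s - 1)"
    using s0 by (intro tendsto_intros)
  then have "(\<lambda>N. \<Sum>k<Suc N. of_nat (Suc k) powr (-s)) \<longlonglongrightarrow> zeta s"
    unfolding eq zeta_Iz by simp
  then show ?thesis unfolding sums_def by (rule LIMSEQ_imp_Suc)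
qed


lemma arctan_integrable: "((\<lambda>x::real. 1 / (1 + x^2)) has_integral pi) UNIV"
proof (rule has_integral_UNIV_realI)
  have ftc: "((\<lambda>x::real. 1 / (1 + x^2)) has_integral (arctan b - arctan a)) {a..b}" if "a \<le> b" for a b
  proof (rule fundamental_theorem_of_calculus[OF that])
    fix x assume "x \<in> {a..b}"
    show "(arctan has_vector_derivative 1 / (1 + x^2)) (at x within {a..b})"
      using DERIV_arctan[of x] by (simp add: has_real_derivative_iff_has_vector_derivative[symmetric]
          has_field_derivative_at_within divide_inverse)
  qed
  show "(\<lambda>x::real. 1 / (1 + x^2)) integrable_on {a..b}" for a b
  proof -
    have pos: "\<And>x::real. 1 + x^2 \<noteq> 0" by (smt (verit) zero_le_power2)
    show ?thesis using pos by (intro integrable_continuous_real continuous_intros) auto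
  qed
  fix e :: real assume "e > 0"
  have "\<forall>\<^sub>F x in at_top. arctan x > pi/2 - e/2"
    using tendsto_arctan_at_top \<open>e > 0\<close> by (intro order_tendstoD(1)) auto
  then obtain R where R: "\<And>x. x \<ge> R \<Longrightarrow> arctan x > pi/2 - e/2"
    unfolding eventually_at_top_linorder by blast
  show "\<exists>R. \<forall>a b. a \<le> -R \<longrightarrow> R \<le> b \<longrightarrow> norm (integral {a..b} (\<lambda>x::real. 1 / (1 + x^2)) - pi) < e"
  proof (intro exI[of _ "max R 0"] allI impI)
    fix a b :: real assume ab: "a \<le> - max R 0" "max R 0 \<le> b"
    then have "a \<le> b" by linarith
    have i: "integral {a..b} (\<lambda>x::real. 1 / (1 + x^2)) = arctan b - arctan a"
      using ftc[OF \<open>a \<le> b\<close>] by (rule integral_unique)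
    have "arctan b > pi/2 - e/2" using R ab by auto
    moreover have "arctan (-a) > pi/2 - e/2" using R ab by auto
    moreover have "arctan b < pi/2" "arctan (-a) < pi/2" by (rule arctan_ubound)+
    ultimately show "norm (integral {a..b} (\<lambda>x::real. 1 / (1 + x^2)) - pi) < e"
      unfolding i arctan_minus by (simp add: abs_less_iff)
  qed
qed

lemma decay_integrable:
  fixes f :: "real \<Rightarrow> complex"
  assumes cont: "continuous_on UNIV f" and dec: "\<And>x. X \<le> \<bar>x\<bar> \<Longrightarrow> norm (f x) \<le> C / x^2"
  shows "f absolutely_integrable_on UNIV"
proof -
  define X1 where "X1 = max X 1"
  have "compact (f ` {-X1..X1})"
    by (rule compact_continuous_image) (use cont in \<open>auto intro: continuous_on_subset\<close>)
  then obtain M where "M > 0" and M: "\<And>x. x \<in> {-X1..X1} \<Longrightarrow> norm (f x) \<le> M"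
    using compact_imp_bounded bounded_pos by (metis image_eqI)
  define D where "D = M * (1 + X1^2) + 2 * \<bar>C\<bar>"
  have bound: "norm (f x) \<le> D * (1 / (1 + x^2))" for x
  proof (cases "\<bar>x\<bar> \<le> X1")
    case True
    then have "x^2 \<le> X1^2"
      by (metis abs_le_square_iff abs_of_nonneg le_max_iff_disj order_trans zero_le_one X1_def abs_ge_zero)
    have "norm (f x) \<le> M" using M True by (simp add: abs_le_iff)
    also have "\<dots> \<le> M * (1 + X1^2) * (1 / (1 + x^2))"
      using \<open>M > 0\<close> \<open>x^2 \<le> X1^2\<close> by (simp add: field_simps add_pos_nonneg)
    also have "\<dots> \<le> D * (1 / (1 + x^2))"
      by (intro mult_right_mono) (auto simp: D_def add_pos_nonneg)
    finally show ?thesis .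
  next
    case False
    then have x1: "\<bar>x\<bar> \<ge> 1" "\<bar>x\<bar> \<ge> X" by (auto simp: X1_def)
    have "1 \<le> \<bar>x\<bar>^2" using x1(1) by (rule one_le_power)
    then have "x^2 \<ge> 1" by simp
    have "norm (f x) \<le> C / x^2" using dec x1 by auto
    also have "\<dots> \<le> \<bar>C\<bar> / x^2" by (intro divide_right_mono) auto
    also have "\<dots> \<le> 2 * \<bar>C\<bar> * (1 / (1 + x^2))"
    proof -
      have p: "x^2 > 0" "1 + x^2 > 0" using \<open>x^2 \<ge> 1\<close> by linarith+
      have "1 / x^2 \<le> 2 / (1 + x^2)"
        using p \<open>x^2 \<ge> 1\<close> by (simp add: divide_simps)
      then have "\<bar>C\<bar> * (1 / x^2) \<le> \<bar>C\<bar> * (2 / (1 + x^2))"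
        by (rule mult_left_mono) simp
      then show ?thesis by (simp add: mult.commute)
    qed
    also have "\<dots> \<le> D * (1 / (1 + x^2))"
      by (intro mult_right_mono) (auto simp: D_def \<open>M > 0\<close> add_pos_nonneg less_imp_le)
    finally show ?thesis .
  qed
  have g: "(\<lambda>x. D * (1 / (1 + x^2))) integrable_on UNIV"
  proof -
    have "(\<lambda>x::real. 1 / (1 + x^2)) integrable_on UNIV"
      using arctan_integrable by (auto simp: integrable_on_def)
    then show ?thesis by (rule integrable_on_mult_right)
  qed
  show ?thesis
  proof (rule measurable_bounded_by_integrable_imp_absolutely_integrable[OF _ _ g])
    show "f \<in> borel_measurable (lebesgue_on UNIV)"
      using cont by (rule continuous_imp_measurable_on_sets_lebesgue) simp
  qed (use bound in auto)
qed


lemma inv_sq_small: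
  fixes C e x :: real
  assumes "e > 0" "max 1 (\<bar>C\<bar>/e) \<le> \<bar>x\<bar>"
  shows "C / x^2 \<le> e"
proof -
  have x1: "1 \<le> \<bar>x\<bar>" and xC: "\<bar>C\<bar> / e \<le> \<bar>x\<bar>" using assms by auto
  have "\<bar>x\<bar> * 1 \<le> \<bar>x\<bar> * \<bar>x\<bar>" by (rule mult_left_mono) (use x1 in auto)
  then have "\<bar>x\<bar> \<le> x^2" by (simp add: power2_eq_square abs_mult_self_eq)
  have "\<bar>C\<bar> \<le> e * \<bar>x\<bar>" using xC assms(1) by (simp add: divide_le_eq mult.commute)
  also have "\<dots> \<le> e * x^2" using \<open>\<bar>x\<bar> \<le> x^2\<close> assms(1) by simp
  finally have "\<bar>C\<bar> \<le> e * x^2" .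
  moreover have "x^2 > 0" using x1 by simp
  ultimately have "\<bar>C\<bar> / x^2 \<le> e" by (simp add: divide_le_eq)
  moreover have "C / x^2 \<le> \<bar>C\<bar> / x^2" by (intro divide_right_mono) auto
  ultimately show ?thesis by linarith
qed

lemma Complex_shift: "Complex \<sigma> t + \<i> * Complex x y = Complex (\<sigma> - y) (t + x)"
  by (simp add: complex_eq_iff)

lemma Complex_shift_real: "Complex \<sigma> t + \<i> * complex_of_real x = Complex \<sigma> (t + x)"
  by (simp add: complex_eq_iff)

lemma cont_line:
  assumes "\<And>x. isCont K (Complex x y)"
  shows "continuous_on UNIV (\<lambda>x. K (Complex x y))"
proof -
  have "isCont (\<lambda>x. K (Complex x y)) x" for x
  proof -
    have "isCont (\<lambda>x::real. of_real x + \<i> * of_real y) x" by (intro continuous_intros)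
    then have c: "isCont (\<lambda>x::real. Complex x y) x" by (simp add: Complex_eq)
    show ?thesis using isCont_o2[OF c assms] .
  qed
  then show ?thesis by (simp add: continuous_on_eq_continuous_at)
qed

lemma strip_convex: "convex {z. a \<le> Im z \<and> Im z \<le> (b::real)}"
proof -
  have "{z. a \<le> Im z \<and> Im z \<le> b} = {z. Im z \<ge> a} \<inter> {z. Im z \<le> b}" by auto
  then show ?thesis using convex_halfspace_Im_ge convex_halfspace_Im_le convex_Int by metis
qed

lemma rect_in_strip:
  assumes "A \<ge> 0" "B \<ge> 0" "a \<le> 0"
  shows "path_image (rectpath (Complex (-A) a) (Complex B 0)) \<subseteq> {z. a \<le> Im z \<and> Im z \<le> 0}"
proof -
  have "path_image (rectpath (Complex (-A) a) (Complex B 0)) \<subseteq> cbox (Complex (-A) a) (Complex B 0)"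
    using assms by (intro path_image_rectpath_subset_cbox) auto
  also have "\<dots> \<subseteq> {z. a \<le> Im z \<and> Im z \<le> 0}" by (auto simp: in_cbox_complex_iff)
  finally show ?thesis .
qed

lemma fourier_piece:
  fixes \<sigma> t C X :: real and K :: "complex \<Rightarrow> complex" and m :: nat
  assumes \<sigma>: "0 < \<sigma>" "\<sigma> < 2"
    and holK: "K holomorphic_on {z. \<sigma> - 2 \<le> Im z \<and> Im z \<le> 0}"
    and contK: "\<And>z. \<sigma> - 2 \<le> Im z \<Longrightarrow> Im z \<le> 0 \<Longrightarrow> isCont K z"
    and dec: "\<And>x y. X \<le> \<bar>x\<bar> \<Longrightarrow> \<sigma> - 2 \<le> y \<Longrightarrow> y \<le> 0 \<Longrightarrow> norm (K (Complex x y)) \<le> C / x^2"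
    and m: "m \<ge> 1"
  shows "((\<lambda>x. of_nat m powr (- Complex 2 (t + x)) * K (Complex x (\<sigma> - 2))) has_integral
           (fourier K (ln (real m)) * of_nat m powr (- Complex \<sigma> t))) UNIV"
proof -
  define a where "a = \<sigma> - 2"
  define S where "S = {z. \<sigma> - 2 \<le> Im z \<and> Im z \<le> 0}"
  define \<Phi> where "\<Phi> u = of_nat m powr (- (Complex \<sigma> t + \<i> * u)) * K u" for u
  have a0: "a < 0" using \<sigma> by (simp add: a_def)
  have bot_eq: "\<Phi> (Complex x a) = of_nat m powr (- Complex 2 (t + x)) * K (Complex x (\<sigma> - 2))" for x
    by (simp add: \<Phi>_def Complex_shift a_def)
  have normP: "norm (\<Phi> u) \<le> norm (K u)" if "u \<in> S" for u
  proof -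
    have "norm (of_nat m powr (- (Complex \<sigma> t + \<i> * u)) :: complex) = real m powr (- (\<sigma> - Im u))"
      by (subst norm_powr_real_powr) auto
    also have "\<dots> \<le> real m powr 0"
      using that \<sigma> m by (intro powr_mono) (auto simp: S_def)
    also have "\<dots> = 1" using m by simp
    finally show ?thesis unfolding \<Phi>_def norm_mult
      by (simp add: mult_left_le_one_le)
  qed
  have holP: "\<Phi> holomorphic_on S"
    unfolding \<Phi>_def S_def by (intro holomorphic_intros holK)
  have contb: "continuous_on UNIV (\<lambda>x. \<Phi> (Complex x a))"
  proof -
    have "continuous_on UNIV (\<lambda>x. K (Complex x a))"
      by (rule cont_line, rule contK) (use \<sigma> in \<open>auto simp: a_def\<close>)
    moreover have "continuous_on UNIV (\<lambda>x::real. of_nat m powr (- Complex 2 (t + x)) :: complex)"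
    proof -
      have "continuous_on UNIV (\<lambda>x::real. - (of_real 2 + \<i> * of_real (t + x)) :: complex)"
        by (intro continuous_intros)
      then have "continuous_on UNIV (\<lambda>x::real. exp ((- (of_real 2 + \<i> * of_real (t + x))) * Ln (of_nat m)) :: complex)"
        by (intro continuous_intros)
      moreover have "(of_nat m powr (- Complex 2 (t + x)) :: complex) = exp ((- (of_real 2 + \<i> * of_real (t + x))) * Ln (of_nat m))" for x
        using m by (simp add: powr_def Complex_eq)
      ultimately show ?thesis by simp
    qed
    ultimately show ?thesis unfolding bot_eq unfolding a_def by (auto intro: continuous_on_mult)
  qed
  have bot_int: "(\<lambda>x. \<Phi> (Complex x a)) integrable_on UNIV"
  proof -
    have "(\<lambda>x. \<Phi> (Complex x a)) absolutely_integrable_on UNIV"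
    proof (rule decay_integrable[OF contb])
      fix x :: real assume "X \<le> \<bar>x\<bar>"
      then show "norm (\<Phi> (Complex x a)) \<le> C / x^2"
        using normP[of "Complex x a"] dec[of x a] a0 by (auto simp: S_def a_def)
    qed
    then show ?thesis by (simp add: absolutely_integrable_on_def)
  qed
  define L where "L = integral UNIV (\<lambda>x. \<Phi> (Complex x a))"
  have "((\<lambda>x. \<Phi> (of_real x)) has_integral (L - 0)) UNIV"
  proof (rule strip_shift[OF a0, where Rz=0])
    fix A B :: real assume "A \<ge> 0" "B \<ge> 0"
    show "(\<Phi> has_contour_integral 0) (rectpath (Complex (-A) a) (Complex B 0))"
      by (rule Cauchy_theorem_convex_simple[OF holP])
         (use rect_in_strip[OF \<open>A \<ge> 0\<close> \<open>B \<ge> 0\<close>, of a] a0 strip_convex in \<open>auto simp: S_def a_def\<close>)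
  next
    fix e :: real assume "e > 0"
    show "\<exists>R. \<forall>x y. R \<le> \<bar>x\<bar> \<longrightarrow> a \<le> y \<longrightarrow> y \<le> 0 \<longrightarrow> norm (\<Phi> (Complex x y)) \<le> e"
    proof (intro exI[of _ "max X (max 1 (\<bar>C\<bar>/e))"] allI impI)
      fix x y :: real assume xy: "max X (max 1 (\<bar>C\<bar>/e)) \<le> \<bar>x\<bar>" "a \<le> y" "y \<le> 0"
      have "norm (\<Phi> (Complex x y)) \<le> norm (K (Complex x y))"
        using normP xy by (auto simp: S_def a_def)
      also have "\<dots> \<le> C / x^2" using dec[of x y] xy by (auto simp: a_def)
      also have "\<dots> \<le> e" using inv_sq_small[OF \<open>e > 0\<close>, of C x] xy by auto
      finally show "norm (\<Phi> (Complex x y)) \<le> e" .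
    qed
  next
    show "((\<lambda>x. \<Phi> (Complex x a)) has_integral L) UNIV"
      using bot_int by (simp add: L_def integrable_integral)
  qed
  then have hP: "((\<lambda>x. \<Phi> (of_real x)) has_integral L) UNIV" by simp
  define c where "c = (of_nat m powr (- Complex \<sigma> t) :: complex)"
  have c0: "c \<noteq> 0" using m by (simp add: c_def)
  have Preal: "\<Phi> (of_real x) = c * (K (of_real x) * exp (- \<i> * of_real (x * ln (real m))))" for x
  proof -
    have "(of_nat m powr (- (Complex \<sigma> t + \<i> * of_real x)) :: complex)
          = of_nat m powr (- Complex \<sigma> t + (- (\<i> * of_real x)))" by simp
    also have "\<dots> = c * of_nat m powr (- (\<i> * of_real x))" unfolding c_def by (rule powr_add)
    also have "(of_nat m powr (- (\<i> * of_real x)) :: complex) = exp (- \<i> * of_real (x * ln (real m)))"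
      using m by (simp add: powr_def mult.assoc)
    finally show ?thesis by (simp add: \<Phi>_def)
  qed
  have "((\<lambda>x. c * (K (of_real x) * exp (- \<i> * of_real (x * ln (real m))))) has_integral L) UNIV"
    using hP unfolding Preal .
  then have "((\<lambda>x. K (of_real x) * exp (- \<i> * of_real (x * ln (real m)))) has_integral L / c) UNIV"
    using has_integral_mult_right_iff[OF c0] by blast
  then have "fourier K (ln (real m)) = L / c"
    unfolding fourier_def by (rule integral_unique)
  then have "fourier K (ln (real m)) * c = L" using c0 by simp
  then show ?thesis
    using bot_int unfolding c_def L_def bot_eq by (simp add: integrable_integral)
qed

lemma bottom_sum:
  fixes \<sigma> t C X :: real and K :: "complex \<Rightarrow> complex"
  assumes \<sigma>: "0 < \<sigma>" "\<sigma> < 2"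
    and holK: "K holomorphic_on {z. \<sigma> - 2 \<le> Im z \<and> Im z \<le> 0}"
    and contK: "\<And>z. \<sigma> - 2 \<le> Im z \<Longrightarrow> Im z \<le> 0 \<Longrightarrow> isCont K z"
    and dec: "\<And>x y. X \<le> \<bar>x\<bar> \<Longrightarrow> \<sigma> - 2 \<le> y \<Longrightarrow> y \<le> 0 \<Longrightarrow> norm (K (Complex x y)) \<le> C / x^2"
  shows "(\<lambda>x. zeta (Complex 2 (t + x)) * K (Complex x (\<sigma> - 2))) integrable_on UNIV"
    and "(\<lambda>n. fourier K (ln (real (Suc n))) * of_nat (Suc n) powr (- Complex \<sigma> t))
           sums integral UNIV (\<lambda>x. zeta (Complex 2 (t + x)) * K (Complex x (\<sigma> - 2)))"
proof -
  define Fb where "Fb x = zeta (Complex 2 (t + x)) * K (Complex x (\<sigma> - 2))" for x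
  define g where "g n x = of_nat (Suc n) powr (- Complex 2 (t + x)) * K (Complex x (\<sigma> - 2))" for n x
  define Ln where "Ln n = fourier K (ln (real (Suc n))) * of_nat (Suc n) powr (- Complex \<sigma> t)" for n
  have gi: "(g n has_integral Ln n) UNIV" for n
    unfolding g_def Ln_def by (rule fourier_piece[OF \<sigma> holK contK dec]) auto
  have Kb: "(\<lambda>x. K (Complex x (\<sigma> - 2))) absolutely_integrable_on UNIV"
  proof (rule decay_integrable)
    show "continuous_on UNIV (\<lambda>x. K (Complex x (\<sigma> - 2)))"
      by (rule cont_line, rule contK) (use \<sigma> in auto)
    show "norm (K (Complex x (\<sigma> - 2))) \<le> C / x^2" if "X \<le> \<bar>x\<bar>" for x
      using dec[OF that] \<sigma> by auto
  qed
  then have nKb: "(\<lambda>x. norm (K (Complex x (\<sigma> - 2)))) integrable_on UNIV"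
    by (simp add: absolutely_integrable_on_def)
  define Z where "Z = (\<Sum>n. real (Suc n) powr (-2))"
  have sumZ: "summable (\<lambda>n. real (Suc n) powr (-2))" by (rule summable_Suc_powr) simp
  have normg: "norm (g n x) = real (Suc n) powr (-2) * norm (K (Complex x (\<sigma> - 2)))" for n x
  proof -
    have "norm (of_nat (Suc n) powr (- Complex 2 (t + x)) :: complex) = real (Suc n) powr (-2)"
      by (subst norm_powr_real_powr) auto
    then show ?thesis by (simp add: g_def norm_mult)
  qed
  have i1: "(\<lambda>x. \<Sum>n<N. g n x) integrable_on UNIV" for N
    by (rule integrable_sum) (use gi in auto)
  have i2: "(\<lambda>x. Z * norm (K (Complex x (\<sigma> - 2)))) integrable_on UNIV"
    using nKb by (rule integrable_on_mult_right)
  have i3: "norm (\<Sum>n<N. g n x) \<le> Z * norm (K (Complex x (\<sigma> - 2)))" for N x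
  proof -
    have "norm (\<Sum>n<N. g n x) \<le> (\<Sum>n<N. norm (g n x))" by (rule norm_sum)
    also have "\<dots> = (\<Sum>n<N. real (Suc n) powr (-2)) * norm (K (Complex x (\<sigma> - 2)))"
      by (simp add: normg sum_distrib_right)
    also have "\<dots> \<le> Z * norm (K (Complex x (\<sigma> - 2)))"
      unfolding Z_def by (intro mult_right_mono sum_le_suminf sumZ) auto
    finally show ?thesis .
  qed
  have i4: "(\<lambda>N. \<Sum>n<N. g n x) \<longlonglongrightarrow> Fb x" for x
  proof -
    have "(\<lambda>n. of_nat (Suc n) powr (- Complex 2 (t + x))) sums zeta (Complex 2 (t + x))"
      by (rule zeta_dirichlet) simp
    from sums_mult2[OF this, of "K (Complex x (\<sigma> - 2))"]
    show ?thesis unfolding sums_def g_def Fb_def .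
  qed
  note dc = dominated_convergence[where f="\<lambda>N x. \<Sum>n<N. g n x" and S=UNIV and g=Fb, OF i1 i2 i3 i4]
  show "(\<lambda>x. zeta (Complex 2 (t + x)) * K (Complex x (\<sigma> - 2))) integrable_on UNIV"
    using dc(1) unfolding Fb_def .
  have "integral UNIV (\<lambda>x. \<Sum>n<N. g n x) = (\<Sum>n<N. Ln n)" for N
  proof -
    have "integral UNIV (g n) = Ln n" for n using gi[of n] by (rule integral_unique)
    then show ?thesis using gi by (subst integral_sum) (auto simp: integrable_on_def)
  qed
  then have "(\<lambda>N. \<Sum>n<N. Ln n) \<longlonglongrightarrow> integral UNIV Fb" using dc(2) by simp
  then show "(\<lambda>n. fourier K (ln (real (Suc n))) * of_nat (Suc n) powr (- Complex \<sigma> t))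
           sums integral UNIV (\<lambda>x. zeta (Complex 2 (t + x)) * K (Complex x (\<sigma> - 2)))"
    unfolding sums_def Ln_def Fb_def .
qed

lemma zeta_growth:
  assumes "Re s \<ge> 1/2" "norm (s - 1) \<ge> 1"
  shows "norm (zeta s) \<le> (1 + MI) * norm s"
proof -
  have "norm (zeta s) \<le> norm (s / (s - 1)) + norm (s * Iz s)"
    unfolding zeta_Iz by (rule norm_triangle_ineq4)
  also have "norm (s / (s - 1)) \<le> norm s"
  proof -
    have "norm (s / (s - 1)) = norm s / norm (s - 1)" by (simp add: norm_divide)
    also have "\<dots> \<le> norm s / 1" using assms(2) by (intro divide_left_mono) auto
    finally show ?thesis by simp
  qed
  also have "norm (s * Iz s) \<le> norm s * MI"
    unfolding norm_mult using Iz_bound[OF assms(1)] by (intro mult_left_mono) auto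
  finally show ?thesis by (simp add: algebra_simps)
qed

lemma F_shift:
  fixes \<sigma> t C X :: real and K :: "complex \<Rightarrow> complex" and L :: complex
  assumes \<sigma>: "1/2 \<le> \<sigma>" "\<sigma> < 1"
    and holK: "K holomorphic_on {z. \<sigma> - 2 \<le> Im z \<and> Im z \<le> 0}"
    and dec: "\<And>x y. X \<le> \<bar>x\<bar> \<Longrightarrow> \<sigma> - 2 \<le> y \<Longrightarrow> y \<le> 0 \<Longrightarrow> norm (K (Complex x y)) \<le> C / x^2"
    and bottom: "((\<lambda>x. zeta (Complex 2 (t + x)) * K (Complex x (\<sigma> - 2))) has_integral L) UNIV"
  shows "((\<lambda>x. zeta (Complex \<sigma> (t + x)) * K (of_real x)) has_integral
           (L - 2 * of_real pi * K (Complex (-t) (\<sigma> - 1)))) UNIV"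
proof -
  define a where "a = \<sigma> - 2"
  define S where "S = {z. \<sigma> - 2 \<le> Im z \<and> Im z \<le> 0}"
  define ss where "ss u = Complex \<sigma> t + \<i> * u" for u
  define F where "F u = zeta (ss u) * K u" for u
  define u0 where "u0 = Complex (-t) (\<sigma> - 1)"
  define mm where "mm s = s - s * (s - 1) * Iz s" for s
  define hh where "hh u = K u * mm (ss u)" for u
  have a0: "a < 0" using \<sigma> by (simp add: a_def)
  have ss_u0: "ss u0 = 1" by (simp add: ss_def u0_def complex_eq_iff)
  have ss_minus: "ss u - 1 = \<i> * (u - u0)" for u by (simp add: ss_def u0_def complex_eq_iff)
  have ss_C: "ss (Complex x y) = Complex (\<sigma> - y) (t + x)" for x y
    unfolding ss_def by (rule Complex_shift)
  have mm_hol: "mm holomorphic_on {s. Re s > 0}"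
    unfolding mm_def by (intro holomorphic_intros Iz_holomorphic)
  have ss_hol: "ss holomorphic_on S" unfolding ss_def by (intro holomorphic_intros)
  have ss_img: "ss ` S \<subseteq> {s. Re s > 0}"
    using \<sigma> by (auto simp: ss_def S_def)
  have hh_hol: "hh holomorphic_on S"
  proof -
    have "(mm \<circ> ss) holomorphic_on S" by (rule holomorphic_on_compose_gen[OF ss_hol mm_hol ss_img])
    then have "(\<lambda>u. mm (ss u)) holomorphic_on S" by (simp add: o_def)
    then show ?thesis unfolding hh_def using holK by (intro holomorphic_intros) (auto simp: S_def)
  qed
  have zeta_mm: "zeta s = mm s / (s - 1)" if "s \<noteq> 1" for s
  proof -
    have s1: "s - 1 \<noteq> 0" using that by simp
    have "mm s / (s - 1) = s / (s - 1) - s * (s - 1) * Iz s / (s - 1)"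
      unfolding mm_def by (rule diff_divide_distrib)
    also have "s * (s - 1) * Iz s / (s - 1) = s * Iz s" using s1 by simp
    finally show ?thesis by (simp add: zeta_Iz)
  qed
  have F_eq: "F u = - \<i> * (hh u / (u - u0))" if "u \<noteq> u0" for u
  proof -
    have d: "u - u0 \<noteq> 0" using that by simp
    have "ss u - 1 \<noteq> 0" using d by (simp add: ss_minus)
    then have "mm (ss u) = zeta (ss u) * (ss u - 1)" using zeta_mm[of "ss u"] by simp
    also have "\<dots> = zeta (ss u) * (\<i> * (u - u0))" by (simp add: ss_minus)
    finally have "hh u / (u - u0) = K u * (zeta (ss u) * (\<i> * (u - u0))) / (u - u0)"
      by (simp add: hh_def)
    also have "\<dots> = \<i> * F u" using d by (simp add: F_def)
    finally show ?thesis by simp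
  qed
  have convS: "convex S" unfolding S_def by (rule strip_convex)
  have "((\<lambda>x. F (of_real x)) has_integral (L - 2 * of_real pi * K u0)) UNIV"
  proof (rule strip_shift[OF a0, where Rz="\<bar>t\<bar> + 1"])
    fix A B :: real assume AB: "A \<ge> \<bar>t\<bar> + 1" "B \<ge> \<bar>t\<bar> + 1"
    define \<gamma> where "\<gamma> = rectpath (Complex (-A) a) (Complex B 0)"
    have u0_box: "u0 \<in> box (Complex (-A) a) (Complex B 0)"
      using AB \<sigma> by (auto simp: u0_def a_def in_box_complex_iff)
    have box_S: "box (Complex (-A) a) (Complex B 0) \<subseteq> S"
      by (auto simp: S_def a_def in_box_complex_iff)
    have u0_int: "u0 \<in> interior S"
      using interior_maximal[OF box_S open_box] u0_box by blast
    have "path_image \<gamma> \<subseteq> S"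
      unfolding \<gamma>_def S_def using rect_in_strip[of A B a] AB a0 by (auto simp: a_def)
    moreover have "u0 \<notin> path_image \<gamma>"
    proof -
      have "-A \<le> B" using AB by linarith
      then show ?thesis
        using path_image_rectpath_inter_box[of "Complex (-A) a" "Complex B 0"] u0_box a0
        unfolding \<gamma>_def by auto
    qed
    ultimately have pi_sub: "path_image \<gamma> \<subseteq> S - {u0}" by blast
    have CF: "((\<lambda>w. hh w / (w - u0)) has_contour_integral (2 * pi * \<i> * winding_number \<gamma> u0 * hh u0)) \<gamma>"
      by (rule Cauchy_integral_formula_convex_simple[OF convS hh_hol u0_int])
         (use pi_sub in \<open>auto simp: \<gamma>_def\<close>)
    have w1: "winding_number \<gamma> u0 = 1" unfolding \<gamma>_def by (rule winding_number_rectpath[OF u0_box])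
    have hh0: "hh u0 = K u0" by (simp add: hh_def ss_u0 mm_def)
    have "((\<lambda>w. - \<i> * (hh w / (w - u0))) has_contour_integral (- \<i> * (2 * pi * \<i> * 1 * K u0))) \<gamma>"
      using has_contour_integral_lmul[OF CF, of "- \<i>"] unfolding w1 hh0 .
    then have hF: "(F has_contour_integral (- \<i> * (2 * pi * \<i> * 1 * K u0))) \<gamma>"
    proof (rule has_contour_integral_eq)
      fix w assume "w \<in> path_image \<gamma>"
      then have "w \<noteq> u0" using pi_sub by auto
      then show "- \<i> * (hh w / (w - u0)) = F w" by (simp add: F_eq)
    qed
    have eqv: "- \<i> * (2 * pi * \<i> * 1 * K u0) = 2 * of_real pi * K u0" by simp
    show "(F has_contour_integral (2 * of_real pi * K u0)) (rectpath (Complex (-A) a) (Complex B 0))"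
      using hF unfolding eqv \<gamma>_def .
  next
    fix e :: real assume e: "e > 0"
    define D where "D = 2 * (1 + MI) * \<bar>C\<bar>"
    show "\<exists>R. \<forall>x y. R \<le> \<bar>x\<bar> \<longrightarrow> a \<le> y \<longrightarrow> y \<le> 0 \<longrightarrow> norm (F (Complex x y)) \<le> e"
    proof (intro exI[of _ "max X (max (\<bar>t\<bar> + 2) (D / e))"] allI impI)
      fix x y :: real assume xy: "max X (max (\<bar>t\<bar> + 2) (D / e)) \<le> \<bar>x\<bar>" "a \<le> y" "y \<le> 0"
      have xX: "X \<le> \<bar>x\<bar>" and xt: "\<bar>t\<bar> + 2 \<le> \<bar>x\<bar>" and xD: "D / e \<le> \<bar>x\<bar>" using xy by auto
      define s where "s = Complex (\<sigma> - y) (t + x)"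
      have Fs: "F (Complex x y) = zeta s * K (Complex x y)" by (simp add: F_def ss_C s_def)
      have ReS: "Re s \<ge> 1/2" "\<bar>Re s\<bar> \<le> 2" using \<sigma> xy by (auto simp: s_def a_def)
      have "\<bar>t + x\<bar> \<ge> 2" using xt by linarith
      have "norm (s - 1) \<ge> 1"
        using abs_Im_le_cmod[of "s - 1"] \<open>\<bar>t + x\<bar> \<ge> 2\<close> by (simp add: s_def)
      have "norm s \<le> \<bar>Re s\<bar> + \<bar>Im s\<bar>" by (rule cmod_le)
      also have "\<dots> \<le> 2 * \<bar>x\<bar>" using ReS xt by (simp add: s_def)
      finally have ns: "norm s \<le> 2 * \<bar>x\<bar>" .
      have MI0: "1 + MI \<ge> 0" using MI_nonneg by simp
      have nz: "norm (zeta s) \<le> (1 + MI) * (2 * \<bar>x\<bar>)"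
        using zeta_growth[OF ReS(1) \<open>norm (s - 1) \<ge> 1\<close>] ns MI0
        by (meson mult_left_mono order_trans)
      have nK: "norm (K (Complex x y)) \<le> C / x^2" using dec[OF xX] xy by (auto simp: a_def)
      have x0: "\<bar>x\<bar> > 0" using xt by linarith
      have "norm (F (Complex x y)) \<le> ((1 + MI) * (2 * \<bar>x\<bar>)) * (C / x^2)"
        unfolding Fs norm_mult using MI0 by (intro mult_mono nz nK) auto
      also have "\<dots> = 2 * (1 + MI) * C / \<bar>x\<bar>"
        using x0 by (simp add: power2_eq_square field_simps abs_mult_self_eq)
      also have "\<dots> \<le> D / \<bar>x\<bar>"
        unfolding D_def using x0 MI0 by (intro divide_right_mono mult_left_mono) auto
      also have "\<dots> \<le> e" using xD e x0 by (simp add: divide_le_eq mult.commute)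
      finally show "norm (F (Complex x y)) \<le> e" .
    qed
  next
    show "((\<lambda>x. F (Complex x a)) has_integral L) UNIV"
      using bottom by (simp add: F_def ss_C a_def)
  qed
  then show ?thesis by (simp add: F_def ss_def Complex_shift_real u0_def)
qed


theorem lemma1:
  fixes \<sigma> t :: real and K :: "complex \<Rightarrow> complex"
  assumes "1/2 \<le> \<sigma>" and "\<sigma> < 1"
    and "K analytic_on {z. \<sigma> - 2 \<le> Im z \<and> Im z \<le> 0}"
    and "\<exists>C X. \<forall>x y. X \<le> \<bar>x\<bar> \<longrightarrow> \<sigma> - 2 \<le> y \<longrightarrow> y \<le> 0 \<longrightarrow>
            norm (K (Complex x y)) \<le> C / \<bar>x\<bar>^2"
  shows "integral UNIV (\<lambda>u::real. zeta (Complex \<sigma> (t + u)) * K (complex_of_real u))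
         = (\<Sum>n. fourier K (ln (real (Suc n))) * of_nat (Suc n) powr (- Complex \<sigma> t))
           - 2 * of_real pi * K (Complex (- t) (- (1 - \<sigma>)))"
proof -
  have holK: "K holomorphic_on {z. \<sigma> - 2 \<le> Im z \<and> Im z \<le> 0}"
    using assms(3) by (rule analytic_imp_holomorphic)
  have contK: "isCont K z" if "\<sigma> - 2 \<le> Im z" "Im z \<le> 0" for z
    using analytic_on_imp_differentiable_at[OF assms(3)] field_differentiable_imp_continuous_at that
    by blast
  obtain C X where CX: "\<forall>x y. X \<le> \<bar>x\<bar> \<longrightarrow> \<sigma> - 2 \<le> y \<longrightarrow> y \<le> 0 \<longrightarrow>
            norm (K (Complex x y)) \<le> C / \<bar>x\<bar>^2"
    using assms(4) by blast
  have dec: "norm (K (Complex x y)) \<le> C / x^2" if "X \<le> \<bar>x\<bar>" "\<sigma> - 2 \<le> y" "y \<le> 0" for x y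
    using CX that by simp
  have \<sigma>': "0 < \<sigma>" "\<sigma> < 2" using assms(1,2) by auto
  note bs = bottom_sum[OF \<sigma>' holK contK dec, where t=t]
  define Lb where "Lb = integral UNIV (\<lambda>x. zeta (Complex 2 (t + x)) * K (Complex x (\<sigma> - 2)))"
  have hb: "((\<lambda>x. zeta (Complex 2 (t + x)) * K (Complex x (\<sigma> - 2))) has_integral Lb) UNIV"
    unfolding Lb_def by (rule integrable_integral[OF bs(1)])
  have "((\<lambda>x. zeta (Complex \<sigma> (t + x)) * K (of_real x)) has_integral
           (Lb - 2 * of_real pi * K (Complex (-t) (\<sigma> - 1)))) UNIV"
    using F_shift[OF assms(1) assms(2) holK dec hb] by blast
  then have "integral UNIV (\<lambda>u::real. zeta (Complex \<sigma> (t + u)) * K (complex_of_real u))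
      = Lb - 2 * of_real pi * K (Complex (-t) (\<sigma> - 1))"
    by (rule integral_unique)
  moreover have "(\<Sum>n. fourier K (ln (real (Suc n))) * of_nat (Suc n) powr (- Complex \<sigma> t)) = Lb"
    using bs(2) unfolding Lb_def by (rule sums_unique[symmetric])
  ultimately show ?thesis by simp
qed

end
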